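(* Let $C$ be a contractible globular extension equipped with a pregroupoidal structure and let $G$ be an $\infty$-groupoid of type $C$. For every $n\ge 0$, the relation $\sim$ on $G_n$ is an equivalence relation. Moreover, for $n\ge 1$, if $u\sim u'$ and $v\sim v'$ are $n$-arrows with $s(v)=t(u)$ (hence $s(v')=t(u')$), then $v\ast^n_{n-1}u\sim v'\ast^n_{n-1}u'$.
   Context: Globe category and globular extensions: The globe category $\mathbb{G}$ is the category with objects $D_n$ ($n\ge 0$), generated by morphisms $\sigma_n,\tau_n\colon D_{n-1}\to D_n$ ($n\ge 1$) subject to $\sigma_{n+1}\sigma_n=\tau_{n+1}\sigma_n$ and $\sigma_{n+1}\tau_n=\tau_{n+1}\tau_n$. For $i\ge j\ge 0$ put $\sigma^i_j=\sigma_i\cdots\sigma_{j+1}$ and $\tau^i_j=\tau_i\cdots\tau_{j+1}\colon D_j\to D_i$. A table of dimensions of width $n\ge 1$ consists of integers $i_1,\dots,i_n,i'_1,\dots,i'_{n-1}\ge 0$ with $i_k>i'_k$ and $i_{k+1}>i'_k$; its dimension is the largest integer occurring in it. If $C$ is a category with a functor $\mathbb{G}\to C$, the globular sum associated to such a table is the colimit in $C$ (if it exists) of the zig-zag $D_{i_1}\xleftarrow{\sigma^{i_1}_{i'_1}}D_{i'_1}\xrightarrow{\tau^{i_2}_{i'_1}}D_{i_2}\leftarrow\cdots\leftarrow D_{i'_{n-1}}\xrightarrow{\tau^{i_n}_{i'_{n-1}}}D_{i_n}$, written $D_{i_1}\amalg_{D_{i'_1}}\cdots\amalg_{D_{i'_{n-1}}}D_{i_n}$;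 its dimension is that of the table. A globular extension is a category $C$ with a functor $\mathbb{G}\to C$ in which all globular sums exist. Two morphisms $f,g\colon D_n\to X$ are globularly parallel if $n=0$, or $f\sigma_n=g\sigma_n$ and $f\tau_n=g\tau_n$. A lifting of $(f,g)$ is $h\colon D_{n+1}\to X$ with $h\sigma_{n+1}=f$, $h\tau_{n+1}=g$. A pair $(f,g)\colon D_n\to S$ is admissible if $f,g$ are globularly parallel and $S$ is a globular sum of dimension at most $n+1$; $C$ is contractible if every admissible pair admits a lifting. $\infty$-groupoids: For $C$ a contractible globular extension, an $\infty$-groupoid of type $C$ is a presheaf $G$ on $C$ such that for every table of dimensions the canonical map $G(D_{i_1}\amalg_{D_{i'_1}}\cdots\amalg_{D_{i'_{n-1}}}D_{i_n})\to G_{i_1}\times_{G_{i'_1}}\cdots\times_{G_{i'_{n-1}}}G_{i_n}$ is a bijection; here $G_i=G(D_i)$ is the set of $i$-arrows, the source and target of an $i$-arrow $u$ ($i\ge1$) are $s(u)=G(\sigma_i)(u)$ and $t(u)=G(\tau_i)(u)$, $s^i_j=G(\sigma^i_j)$, $t^i_j=G(\tau^i_j)$, and the fiber product consists of tuples $(u_1,\dots,u_n)$ with $s^{i_k}_{i'_k}(u_k)=t^{i_{k+1}}_{i'_k}(u_{k+1})$. Morphisms are natural transformations. Two $i$-arrows are parallel if $i=0$ or they have the same source and target. Pregroupoidal structure: morphisms $\nabla^i_j\colon D_i\to D_i\amalg_{D_j}D_i$ ($i>j\ge 0$), $\kappa_i\colon D_{i+1}\to D_i$ ($i\ge 0$),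 $w^i_j\colon D_i\to D_i$ ($i>j\ge0$) of $C$ such that $\nabla^i_{i-1}\sigma_i=\epsilon_2\sigma_i$ and $\nabla^i_{i-1}\tau_i=\epsilon_1\tau_i$ (with $\epsilon_1,\epsilon_2\colon D_i\to D_i\amalg_{D_{i-1}}D_i$ the canonical morphisms to the first and second summand), $\nabla^i_j\sigma_i=(\sigma_i\amalg_{D_j}\sigma_i)\nabla^{i-1}_j$ and $\nabla^i_j\tau_i=(\tau_i\amalg_{D_j}\tau_i)\nabla^{i-1}_j$ for $j<i-1$, $\kappa_i\sigma_{i+1}=\kappa_i\tau_{i+1}=\mathrm{id}_{D_i}$, $w^i_{i-1}\sigma_i=\tau_i$, $w^i_{i-1}\tau_i=\sigma_i$, and $w^i_j\sigma_i=\sigma_iw^{i-1}_j$, $w^i_j\tau_i=\tau_iw^{i-1}_j$ for $j<i-1$ (such a structure exists on every contractible globular extension). On an $\infty$-groupoid $G$ of type $C$ this induces compositions $\ast^i_j$: for $i$-arrows $v,u$ with $s^i_j(v)=t^i_j(u)$, $v\ast^i_ju=G(\nabla^i_j)(\xi)$ where $\xi\in G(D_i\amalg_{D_j}D_i)$ corresponds to $(v,u)$ under the canonical bijection with $G_i\times_{G_j}G_i$; units $k_i=G(\kappa_i)\colon G_i\to G_{i+1}$ with $k^i_j=k_{i-1}\cdots k_j$; inverses $G(w^i_j)$. Homotopy: for $n$-arrows $u,v$ of $G$, $u\sim v$ means there is an $(n+1)$-arrow with source $u$ and target $v$. *)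

theory Defs
  imports Main
begin

record ('o, 'm) cat =
  Ob   :: "'o set"
  Mor  :: "'m set"
  Dom  :: "'m \<Rightarrow> 'o"
  Cod  :: "'m \<Rightarrow> 'o"
  Idm  :: "'o \<Rightarrow> 'm"
  Comp :: "'m \<Rightarrow> 'm \<Rightarrow> 'm"   (* Comp g f = g o f *)

definition hom :: "('o, 'm, 'x) cat_scheme \<Rightarrow> 'o \<Rightarrow> 'o \<Rightarrow> 'm set" where
  "hom C X Y = {f \<in> Mor C. Dom C f = X \<and> Cod C f = Y}"

definition category :: "('o, 'm, 'x) cat_scheme \<Rightarrow> bool" where
  "category C \<longleftrightarrow>
     (\<forall>f \<in> Mor C. Dom C f \<in> Ob C \<and> Cod C f \<in> Ob C) \<and>
     (\<forall>X \<in> Ob C. Idm C X \<in> hom C X X) \<and>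
     (\<forall>f \<in> Mor C. \<forall>g \<in> Mor C. Cod C f = Dom C g \<longrightarrow>
         Comp C g f \<in> hom C (Dom C f) (Cod C g)) \<and>
     (\<forall>f \<in> Mor C. Comp C f (Idm C (Dom C f)) = f \<and> Comp C (Idm C (Cod C f)) f = f) \<and>
     (\<forall>f \<in> Mor C. \<forall>g \<in> Mor C. \<forall>h \<in> Mor C. Cod C f = Dom C g \<longrightarrow> Cod C g = Dom C h \<longrightarrow>
         Comp C h (Comp C g f) = Comp C (Comp C h g) f)"

text \<open>A functor from the globe category to C is exactly the data of objects D n and
  morphisms sg n, tg n : D (n-1) -> D n (n >= 1) satisfying the globular relations.\<close>

record ('o, 'm) gcat = "('o, 'm) cat" +
  Dk :: "nat \<Rightarrow> 'o"
  sg :: "nat \<Rightarrow> 'm"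
  tg :: "nat \<Rightarrow> 'm"

definition globe_functor :: "('o, 'm, 'x) gcat_scheme \<Rightarrow> bool" where
  "globe_functor C \<longleftrightarrow>
     (\<forall>n. Dk C n \<in> Ob C) \<and>
     (\<forall>n \<ge> 1. sg C n \<in> hom C (Dk C (n - 1)) (Dk C n) \<and> tg C n \<in> hom C (Dk C (n - 1)) (Dk C n)) \<and>
     (\<forall>n \<ge> 1. Comp C (sg C (n + 1)) (sg C n) = Comp C (tg C (n + 1)) (sg C n) \<and>
              Comp C (sg C (n + 1)) (tg C n) = Comp C (tg C (n + 1)) (tg C n))"

fun sgit :: "('o, 'm, 'x) gcat_scheme \<Rightarrow> nat \<Rightarrow> nat \<Rightarrow> 'm" where
  "sgit C 0 j = Idm C (Dk C j)"
| "sgit C (Suc k) j = Comp C (sg C (j + Suc k)) (sgit C k j)"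

fun tgit :: "('o, 'm, 'x) gcat_scheme \<Rightarrow> nat \<Rightarrow> nat \<Rightarrow> 'm" where
  "tgit C 0 j = Idm C (Dk C j)"
| "tgit C (Suc k) j = Comp C (tg C (j + Suc k)) (tgit C k j)"

definition sigma :: "('o, 'm, 'x) gcat_scheme \<Rightarrow> nat \<Rightarrow> nat \<Rightarrow> 'm" where
  "sigma C i j = sgit C (i - j) j"   (* sigma^i_j : D_j -> D_i, for i >= j *)

definition tau :: "('o, 'm, 'x) gcat_scheme \<Rightarrow> nat \<Rightarrow> nat \<Rightarrow> 'm" where
  "tau C i j = tgit C (i - j) j"

text \<open>A table of width n: the list is = [i_1,...,i_n] and js = [i'_1,...,i'_{n-1}].\<close>

definition is_table :: "nat list \<Rightarrow> nat list \<Rightarrow> bool" where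
  "is_table is js \<longleftrightarrow> length is \<ge> 1 \<and> length js = length is - 1 \<and>
     (\<forall>k < length js. is ! k > js ! k \<and> is ! (k + 1) > js ! k)"

definition tdim :: "nat list \<Rightarrow> nat list \<Rightarrow> nat" where
  "tdim is js = Max (set (is @ js))"

text \<open>Cocones under the zig-zag diagram of a table, with apex S and legs e k : D_{i_k} -> S.\<close>

definition is_cocone :: "('o, 'm, 'x) gcat_scheme \<Rightarrow> nat list \<Rightarrow> nat list \<Rightarrow> 'o \<Rightarrow> (nat \<Rightarrow> 'm) \<Rightarrow> bool" where
  "is_cocone C is js S e \<longleftrightarrow> S \<in> Ob C \<and>
     (\<forall>k < length is. e k \<in> hom C (Dk C (is ! k)) S) \<and>
     (\<forall>k < length js. Comp C (e k) (sigma C (is ! k) (js ! k)) =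
                     Comp C (e (k + 1)) (tau C (is ! (k + 1)) (js ! k)))"

definition is_colimit :: "('o, 'm, 'x) gcat_scheme \<Rightarrow> nat list \<Rightarrow> nat list \<Rightarrow> 'o \<Rightarrow> (nat \<Rightarrow> 'm) \<Rightarrow> bool" where
  "is_colimit C is js S e \<longleftrightarrow> is_cocone C is js S e \<and>
     (\<forall>T f. is_cocone C is js T f \<longrightarrow>
        (\<exists>!h. h \<in> hom C S T \<and> (\<forall>k < length is. Comp C h (e k) = f k)))"

definition globular_extension :: "('o, 'm, 'x) gcat_scheme \<Rightarrow> bool" where
  "globular_extension C \<longleftrightarrow> category C \<and> globe_functor C \<and>
     (\<forall>is js. is_table is js \<longrightarrow> (\<exists>S e. is_colimit C is js S e))"

definition glob_parallel :: "('o, 'm, 'x) gcat_scheme \<Rightarrow> nat \<Rightarrow> 'm \<Rightarrow> 'm \<Rightarrow> bool" where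
  "glob_parallel C n f g \<longleftrightarrow> n = 0 \<or>
     (Comp C f (sg C n) = Comp C g (sg C n) \<and> Comp C f (tg C n) = Comp C g (tg C n))"

definition contractible :: "('o, 'm, 'x) gcat_scheme \<Rightarrow> bool" where
  "contractible C \<longleftrightarrow> globular_extension C \<and>
     (\<forall>n f g is js S e.
        is_table is js \<and> tdim is js \<le> n + 1 \<and> is_colimit C is js S e \<and>
        f \<in> hom C (Dk C n) S \<and> g \<in> hom C (Dk C n) S \<and> glob_parallel C n f g \<longrightarrow>
        (\<exists>h \<in> hom C (Dk C (n + 1)) S. Comp C h (sg C (n + 1)) = f \<and> Comp C h (tg C (n + 1)) = g))"

text \<open>Psum i j is a chosen globular sum D_i amalg_{D_j} D_i with canonical morphisms
  eps1 i j (first summand) and eps2 i j (second summand).\<close>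

record ('o, 'm) pregr =
  Psum :: "nat \<Rightarrow> nat \<Rightarrow> 'o"
  eps1 :: "nat \<Rightarrow> nat \<Rightarrow> 'm"
  eps2 :: "nat \<Rightarrow> nat \<Rightarrow> 'm"
  nab  :: "nat \<Rightarrow> nat \<Rightarrow> 'm"
  kap  :: "nat \<Rightarrow> 'm"
  winv :: "nat \<Rightarrow> nat \<Rightarrow> 'm"

definition pregroupoidal :: "('o, 'm, 'x) gcat_scheme \<Rightarrow> ('o, 'm) pregr \<Rightarrow> bool" where
  "pregroupoidal C P \<longleftrightarrow>
     (\<forall>i j. j < i \<longrightarrow>
        is_colimit C [i, i] [j] (Psum P i j) (\<lambda>k. if k = 0 then eps1 P i j else eps2 P i j) \<and>
        nab P i j \<in> hom C (Dk C i) (Psum P i j) \<and>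
        winv P i j \<in> hom C (Dk C i) (Dk C i)) \<and>
     (\<forall>i \<ge> 1.
        Comp C (nab P i (i - 1)) (sg C i) = Comp C (eps2 P i (i - 1)) (sg C i) \<and>
        Comp C (nab P i (i - 1)) (tg C i) = Comp C (eps1 P i (i - 1)) (tg C i)) \<and>
     (\<forall>i j. j + 1 < i \<longrightarrow>
        (\<forall>m. m \<in> hom C (Psum P (i - 1) j) (Psum P i j) \<and>
              Comp C m (eps1 P (i - 1) j) = Comp C (eps1 P i j) (sg C i) \<and>
              Comp C m (eps2 P (i - 1) j) = Comp C (eps2 P i j) (sg C i) \<longrightarrow>
              Comp C (nab P i j) (sg C i) = Comp C m (nab P (i - 1) j)) \<and>
        (\<forall>m. m \<in> hom C (Psum P (i - 1) j) (Psum P i j) \<and>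
              Comp C m (eps1 P (i - 1) j) = Comp C (eps1 P i j) (tg C i) \<and>
              Comp C m (eps2 P (i - 1) j) = Comp C (eps2 P i j) (tg C i) \<longrightarrow>
              Comp C (nab P i j) (tg C i) = Comp C m (nab P (i - 1) j))) \<and>
     (\<forall>i. kap P i \<in> hom C (Dk C (i + 1)) (Dk C i) \<and>
          Comp C (kap P i) (sg C (i + 1)) = Idm C (Dk C i) \<and>
          Comp C (kap P i) (tg C (i + 1)) = Idm C (Dk C i)) \<and>
     (\<forall>i \<ge> 1. Comp C (winv P i (i - 1)) (sg C i) = tg C i \<and>
              Comp C (winv P i (i - 1)) (tg C i) = sg C i) \<and>
     (\<forall>i j. j + 1 < i \<longrightarrow>
        Comp C (winv P i j) (sg C i) = Comp C (sg C i) (winv P (i - 1) j) \<and>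
        Comp C (winv P i j) (tg C i) = Comp C (tg C i) (winv P (i - 1) j))"

record ('o, 'm, 'a) presh =
  Gob  :: "'o \<Rightarrow> 'a set"
  Gmor :: "'m \<Rightarrow> 'a \<Rightarrow> 'a"

definition presheaf :: "('o, 'm, 'x) cat_scheme \<Rightarrow> ('o, 'm, 'a) presh \<Rightarrow> bool" where
  "presheaf C G \<longleftrightarrow>
     (\<forall>f \<in> Mor C. \<forall>x \<in> Gob G (Cod C f). Gmor G f x \<in> Gob G (Dom C f)) \<and>
     (\<forall>f \<in> Mor C. \<forall>g \<in> Mor C. Cod C f = Dom C g \<longrightarrow>
        (\<forall>x \<in> Gob G (Cod C g). Gmor G (Comp C g f) x = Gmor G f (Gmor G g x))) \<and>
     (\<forall>X \<in> Ob C. \<forall>x \<in> Gob G X. Gmor G (Idm C X) x = x)"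

text \<open>The fiber product G_{i_1} x_{G_{i'_1}} ... x_{G_{i'_{n-1}}} G_{i_n}, as lists.\<close>

definition fiber_prod :: "('o, 'm, 'x) gcat_scheme \<Rightarrow> ('o, 'm, 'a) presh \<Rightarrow> nat list \<Rightarrow> nat list \<Rightarrow> 'a list set" where
  "fiber_prod C G is js = {us. length us = length is \<and>
      (\<forall>k < length is. us ! k \<in> Gob G (Dk C (is ! k))) \<and>
      (\<forall>k < length js. Gmor G (sigma C (is ! k) (js ! k)) (us ! k) =
                      Gmor G (tau C (is ! (k + 1)) (js ! k)) (us ! (k + 1)))}"

definition infty_groupoid :: "('o, 'm, 'x) gcat_scheme \<Rightarrow> ('o, 'm, 'a) presh \<Rightarrow> bool" where
  "infty_groupoid C G \<longleftrightarrow> contractible C \<and> presheaf C G \<and>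
     (\<forall>is js S e. is_table is js \<and> is_colimit C is js S e \<longrightarrow>
        bij_betw (\<lambda>x. map (\<lambda>k. Gmor G (e k) x) [0..<length is]) (Gob G S) (fiber_prod C G is js))"

definition src :: "('o, 'm, 'x) gcat_scheme \<Rightarrow> ('o, 'm, 'a) presh \<Rightarrow> nat \<Rightarrow> 'a \<Rightarrow> 'a" where
  "src C G n u = Gmor G (sg C n) u"

definition tgt :: "('o, 'm, 'x) gcat_scheme \<Rightarrow> ('o, 'm, 'a) presh \<Rightarrow> nat \<Rightarrow> 'a \<Rightarrow> 'a" where
  "tgt C G n u = Gmor G (tg C n) u"

text \<open>v *^i_j u = G(nabla^i_j)(xi), xi the element of G(D_i amalg_{D_j} D_i) corresponding to (v,u).\<close>

definition gcomp :: "('o, 'm, 'x) gcat_scheme \<Rightarrow> ('o, 'm) pregr \<Rightarrow> ('o, 'm, 'a) presh \<Rightarrow> nat \<Rightarrow> nat \<Rightarrow> 'a \<Rightarrow> 'a \<Rightarrow> 'a" where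
  "gcomp C P G i j v u = Gmor G (nab P i j)
     (THE xi. xi \<in> Gob G (Psum P i j) \<and> Gmor G (eps1 P i j) xi = v \<and> Gmor G (eps2 P i j) xi = u)"

definition homotopic :: "('o, 'm, 'x) gcat_scheme \<Rightarrow> ('o, 'm, 'a) presh \<Rightarrow> nat \<Rightarrow> 'a \<Rightarrow> 'a \<Rightarrow> bool" where
  "homotopic C G n u v \<longleftrightarrow> (\<exists>a \<in> Gob G (Dk C (n + 1)). src C G (n + 1) a = u \<and> tgt C G (n + 1) a = v)"

definition homrel :: "('o, 'm, 'x) gcat_scheme \<Rightarrow> ('o, 'm, 'a) presh \<Rightarrow> nat \<Rightarrow> ('a \<times> 'a) set" where
  "homrel C G n = {(u, v). u \<in> Gob G (Dk C n) \<and> v \<in> Gob G (Dk C n) \<and> homotopic C G n u v}"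

end

theory Submission imports Defs begin

lemma cat_comp_hom: "category C \<Longrightarrow> f \<in> hom C X Y \<Longrightarrow> g \<in> hom C Y Z \<Longrightarrow> Comp C g f \<in> hom C X Z"
  unfolding category_def hom_def by auto
lemma cat_assoc: "category C \<Longrightarrow> f \<in> hom C X Y \<Longrightarrow> g \<in> hom C Y Z \<Longrightarrow> h \<in> hom C Z W \<Longrightarrow>
   Comp C h (Comp C g f) = Comp C (Comp C h g) f"
  unfolding category_def hom_def by auto
lemma cat_idr: "category C \<Longrightarrow> f \<in> hom C X Y \<Longrightarrow> Comp C f (Idm C X) = f"
  unfolding category_def hom_def by auto
lemma hom_mor: "f \<in> hom C X Y \<Longrightarrow> f \<in> Mor C" unfolding hom_def by auto

lemma sg_hom: "globe_functor C \<Longrightarrow> sg C (Suc n) \<in> hom C (Dk C n) (Dk C (Suc n))"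
  unfolding globe_functor_def by (metis diff_Suc_1 le_add1 plus_1_eq_Suc)
lemma tg_hom: "globe_functor C \<Longrightarrow> tg C (Suc n) \<in> hom C (Dk C n) (Dk C (Suc n))"
  unfolding globe_functor_def by (metis diff_Suc_1 le_add1 plus_1_eq_Suc)
lemma glob_ss: "globe_functor C \<Longrightarrow>
   Comp C (sg C (Suc (Suc m))) (sg C (Suc m)) = Comp C (tg C (Suc (Suc m))) (sg C (Suc m)) \<and>
   Comp C (sg C (Suc (Suc m))) (tg C (Suc m)) = Comp C (tg C (Suc (Suc m))) (tg C (Suc m))"
  unfolding globe_functor_def
  by (metis Suc_eq_plus1 le_add2 plus_1_eq_Suc)

lemma sigma_S: "category C \<Longrightarrow> globe_functor C \<Longrightarrow> sigma C (Suc n) n = sg C (Suc n)"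
  unfolding sigma_def using cat_idr[OF _ sg_hom] by simp
lemma tau_S: "category C \<Longrightarrow> globe_functor C \<Longrightarrow> tau C (Suc n) n = tg C (Suc n)"
  unfolding tau_def using cat_idr[OF _ tg_hom] by simp
lemma sigma_SS: "category C \<Longrightarrow> globe_functor C \<Longrightarrow> sigma C (Suc (Suc n)) n = Comp C (sg C (Suc (Suc n))) (sg C (Suc n))"
  unfolding sigma_def using cat_idr[OF _ sg_hom, of C n] by (simp add: numeral_2_eq_2)
lemma tau_SS: "category C \<Longrightarrow> globe_functor C \<Longrightarrow> tau C (Suc (Suc n)) n = Comp C (tg C (Suc (Suc n))) (tg C (Suc n))"
  unfolding tau_def using cat_idr[OF _ tg_hom, of C n] by (simp add: numeral_2_eq_2)

lemma pre_in: "presheaf C G \<Longrightarrow> f \<in> hom C X Y \<Longrightarrow> x \<in> Gob G Y \<Longrightarrow> Gmor G f x \<in> Gob G X"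
  unfolding presheaf_def hom_def by auto
lemma pre_comp: "presheaf C G \<Longrightarrow> f \<in> hom C X Y \<Longrightarrow> g \<in> hom C Y Z \<Longrightarrow> x \<in> Gob G Z \<Longrightarrow>
   Gmor G (Comp C g f) x = Gmor G f (Gmor G g x)"
  unfolding presheaf_def hom_def by auto

lemma colim: "pregroupoidal C P \<Longrightarrow> j < i \<Longrightarrow>
  is_colimit C [i, i] [j] (Psum P i j) (\<lambda>k. if k = 0 then eps1 P i j else eps2 P i j)"
  unfolding pregroupoidal_def by auto
lemma colim_facts: "pregroupoidal C P \<Longrightarrow> j < i \<Longrightarrow>
   Psum P i j \<in> Ob C \<and> eps1 P i j \<in> hom C (Dk C i) (Psum P i j) \<and> eps2 P i j \<in> hom C (Dk C i) (Psum P i j) \<and>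
   Comp C (eps1 P i j) (sigma C i j) = Comp C (eps2 P i j) (tau C i j)"
  using colim[of C P j i] unfolding is_colimit_def is_cocone_def by force
lemma nab_hom: "pregroupoidal C P \<Longrightarrow> j < i \<Longrightarrow> nab P i j \<in> hom C (Dk C i) (Psum P i j)"
  unfolding pregroupoidal_def by auto

lemma table2: "j < i \<Longrightarrow> is_table [i,i] [j]"
  unfolding is_table_def by auto

lemma bij2: "infty_groupoid C G \<Longrightarrow> pregroupoidal C P \<Longrightarrow> j < i \<Longrightarrow>
  bij_betw (\<lambda>x. [Gmor G (eps1 P i j) x, Gmor G (eps2 P i j) x]) (Gob G (Psum P i j)) (fiber_prod C G [i,i] [j])"
proof -
  assume a: "infty_groupoid C G" "pregroupoidal C P" "j < i"
  have "bij_betw (\<lambda>x. map (\<lambda>k. Gmor G ((\<lambda>k. if k = 0 then eps1 P i j else eps2 P i j) k) x) [0..<length [i,i]])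
     (Gob G (Psum P i j)) (fiber_prod C G [i,i] [j])"
    using a colim[of C P j i] table2[of j i] unfolding infty_groupoid_def by blast
  then show ?thesis by (simp add: upt_rec)
qed

lemma xi_unique: "infty_groupoid C G \<Longrightarrow> pregroupoidal C P \<Longrightarrow> j < i \<Longrightarrow>
   x \<in> Gob G (Psum P i j) \<Longrightarrow> y \<in> Gob G (Psum P i j) \<Longrightarrow>
   Gmor G (eps1 P i j) x = Gmor G (eps1 P i j) y \<Longrightarrow> Gmor G (eps2 P i j) x = Gmor G (eps2 P i j) y \<Longrightarrow> x = y"
  using bij2[of C G P j i] unfolding bij_betw_def inj_on_def by auto

lemma xi_exists: "infty_groupoid C G \<Longrightarrow> pregroupoidal C P \<Longrightarrow> j < i \<Longrightarrow>
   v \<in> Gob G (Dk C i) \<Longrightarrow> u \<in> Gob G (Dk C i) \<Longrightarrow>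
   Gmor G (sigma C i j) v = Gmor G (tau C i j) u \<Longrightarrow>
   \<exists>x. x \<in> Gob G (Psum P i j) \<and> Gmor G (eps1 P i j) x = v \<and> Gmor G (eps2 P i j) x = u \<and>
       gcomp C P G i j v u = Gmor G (nab P i j) x"
proof -
  assume a: "infty_groupoid C G" "pregroupoidal C P" "j < i" "v \<in> Gob G (Dk C i)" "u \<in> Gob G (Dk C i)"
    "Gmor G (sigma C i j) v = Gmor G (tau C i j) u"
  have "[v,u] \<in> fiber_prod C G [i,i] [j]"
    using a(4-6) unfolding fiber_prod_def by (auto simp: less_Suc_eq)
  then obtain x where x: "x \<in> Gob G (Psum P i j)" "[Gmor G (eps1 P i j) x, Gmor G (eps2 P i j) x] = [v,u]"
    using bij2[OF a(1-3)] unfolding bij_betw_def by (metis (no_types, lifting) imageE)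
  have "(THE xi. xi \<in> Gob G (Psum P i j) \<and> Gmor G (eps1 P i j) xi = v \<and> Gmor G (eps2 P i j) xi = u) = x"
    apply (rule the_equality)
    using x xi_unique[OF a(1-3)] by auto
  then show ?thesis using x unfolding gcomp_def by auto
qed

lemma ig_facts: "infty_groupoid C G \<Longrightarrow> category C \<and> globe_functor C \<and> presheaf C G"
  unfolding infty_groupoid_def contractible_def globular_extension_def by auto

lemma nab_top: "pregroupoidal C P \<Longrightarrow>
   Comp C (nab P (Suc n) n) (sg C (Suc n)) = Comp C (eps2 P (Suc n) n) (sg C (Suc n)) \<and>
   Comp C (nab P (Suc n) n) (tg C (Suc n)) = Comp C (eps1 P (Suc n) n) (tg C (Suc n))"
proof -
  assume "pregroupoidal C P"
  then have "\<forall>i \<ge> 1.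
        Comp C (nab P i (i - 1)) (sg C i) = Comp C (eps2 P i (i - 1)) (sg C i) \<and>
        Comp C (nab P i (i - 1)) (tg C i) = Comp C (eps1 P i (i - 1)) (tg C i)"
    unfolding pregroupoidal_def by blast
  from spec[OF this, of "Suc n"] show ?thesis by simp
qed

lemma kap_facts: "pregroupoidal C P \<Longrightarrow> kap P n \<in> hom C (Dk C (Suc n)) (Dk C n) \<and>
   Comp C (kap P n) (sg C (Suc n)) = Idm C (Dk C n) \<and> Comp C (kap P n) (tg C (Suc n)) = Idm C (Dk C n)"
  unfolding pregroupoidal_def by simp

lemma winv_facts: "pregroupoidal C P \<Longrightarrow> winv P (Suc n) n \<in> hom C (Dk C (Suc n)) (Dk C (Suc n)) \<and>
   Comp C (winv P (Suc n) n) (sg C (Suc n)) = tg C (Suc n) \<and> Comp C (winv P (Suc n) n) (tg C (Suc n)) = sg C (Suc n)"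
proof -
  assume a: "pregroupoidal C P"
  then have "\<forall>i \<ge> 1. Comp C (winv P i (i - 1)) (sg C i) = tg C i \<and>
              Comp C (winv P i (i - 1)) (tg C i) = sg C i"
    unfolding pregroupoidal_def by blast
  from spec[OF this, of "Suc n"] a show ?thesis unfolding pregroupoidal_def by simp
qed

lemma nab_mid: assumes a: "pregroupoidal C P" and b: "mm \<in> hom C (Psum P (Suc m) m) (Psum P (Suc (Suc m)) m)" and
   c: "Comp C mm (eps1 P (Suc m) m) = Comp C (eps1 P (Suc (Suc m)) m) (sg C (Suc (Suc m)))" and
   d: "Comp C mm (eps2 P (Suc m) m) = Comp C (eps2 P (Suc (Suc m)) m) (sg C (Suc (Suc m)))" shows
   "Comp C (nab P (Suc (Suc m)) m) (sg C (Suc (Suc m))) = Comp C mm (nab P (Suc m) m)"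
proof -
  from a have "\<forall>i j. j + 1 < i \<longrightarrow>
        (\<forall>m. m \<in> hom C (Psum P (i - 1) j) (Psum P i j) \<and>
              Comp C m (eps1 P (i - 1) j) = Comp C (eps1 P i j) (sg C i) \<and>
              Comp C m (eps2 P (i - 1) j) = Comp C (eps2 P i j) (sg C i) \<longrightarrow>
              Comp C (nab P i j) (sg C i) = Comp C m (nab P (i - 1) j)) \<and>
        (\<forall>m. m \<in> hom C (Psum P (i - 1) j) (Psum P i j) \<and>
              Comp C m (eps1 P (i - 1) j) = Comp C (eps1 P i j) (tg C i) \<and>
              Comp C m (eps2 P (i - 1) j) = Comp C (eps2 P i j) (tg C i) \<longrightarrow>
              Comp C (nab P i j) (tg C i) = Comp C m (nab P (i - 1) j))"
    unfolding pregroupoidal_def by blast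
  from spec[OF spec[OF this, of "Suc (Suc m)"], of m] show ?thesis
    using b c d by (simp (no_asm_use)) blast
qed

lemma nab_mid_t: assumes a: "pregroupoidal C P" and b: "mm \<in> hom C (Psum P (Suc m) m) (Psum P (Suc (Suc m)) m)" and
   c: "Comp C mm (eps1 P (Suc m) m) = Comp C (eps1 P (Suc (Suc m)) m) (tg C (Suc (Suc m)))" and
   d: "Comp C mm (eps2 P (Suc m) m) = Comp C (eps2 P (Suc (Suc m)) m) (tg C (Suc (Suc m)))" shows
   "Comp C (nab P (Suc (Suc m)) m) (tg C (Suc (Suc m))) = Comp C mm (nab P (Suc m) m)"
proof -
  from a have "\<forall>i j. j + 1 < i \<longrightarrow>
        (\<forall>m. m \<in> hom C (Psum P (i - 1) j) (Psum P i j) \<and>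
              Comp C m (eps1 P (i - 1) j) = Comp C (eps1 P i j) (sg C i) \<and>
              Comp C m (eps2 P (i - 1) j) = Comp C (eps2 P i j) (sg C i) \<longrightarrow>
              Comp C (nab P i j) (sg C i) = Comp C m (nab P (i - 1) j)) \<and>
        (\<forall>m. m \<in> hom C (Psum P (i - 1) j) (Psum P i j) \<and>
              Comp C m (eps1 P (i - 1) j) = Comp C (eps1 P i j) (tg C i) \<and>
              Comp C m (eps2 P (i - 1) j) = Comp C (eps2 P i j) (tg C i) \<longrightarrow>
              Comp C (nab P i j) (tg C i) = Comp C m (nab P (i - 1) j))"
    unfolding pregroupoidal_def by blast
  from spec[OF spec[OF this, of "Suc (Suc m)"], of m] show ?thesis
    using b c d by (simp (no_asm_use)) blast
qed

lemma comp_top: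
  assumes ig: "infty_groupoid C G" and pg: "pregroupoidal C P"
    and v: "v \<in> Gob G (Dk C (Suc n))" and u: "u \<in> Gob G (Dk C (Suc n))"
    and st: "src C G (Suc n) v = tgt C G (Suc n) u"
  shows "gcomp C P G (Suc n) n v u \<in> Gob G (Dk C (Suc n)) \<and>
    src C G (Suc n) (gcomp C P G (Suc n) n v u) = src C G (Suc n) u \<and>
    tgt C G (Suc n) (gcomp C P G (Suc n) n v u) = tgt C G (Suc n) v"
proof -
  note f = ig_facts[OF ig]
  have eq0: "Gmor G (sigma C (Suc n) n) v = Gmor G (tau C (Suc n) n) u"
    using st f by (simp add: sigma_S tau_S src_def tgt_def)
  obtain x where x: "x \<in> Gob G (Psum P (Suc n) n)" "Gmor G (eps1 P (Suc n) n) x = v"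
     "Gmor G (eps2 P (Suc n) n) x = u" "gcomp C P G (Suc n) n v u = Gmor G (nab P (Suc n) n) x"
    using xi_exists[OF ig pg lessI v u eq0] by blast
  note cf = colim_facts[OF pg, of n "Suc n"]
  note nh = nab_hom[OF pg, of n "Suc n"]
  have p: "presheaf C G" and gf: "globe_functor C" using f by auto
  have "src C G (Suc n) (gcomp C P G (Suc n) n v u) = Gmor G (Comp C (nab P (Suc n) n) (sg C (Suc n))) x"
    unfolding src_def x(4) using pre_comp[OF p sg_hom[OF gf] nh x(1)] by simp
  also have "\<dots> = Gmor G (Comp C (eps2 P (Suc n) n) (sg C (Suc n))) x" using nab_top[OF pg] by simp
  also have "\<dots> = src C G (Suc n) u"
    unfolding src_def x(3)[symmetric] using pre_comp[OF p sg_hom[OF gf] _ x(1)] cf by simp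
  finally have 1: "src C G (Suc n) (gcomp C P G (Suc n) n v u) = src C G (Suc n) u" .
  have "tgt C G (Suc n) (gcomp C P G (Suc n) n v u) = Gmor G (Comp C (nab P (Suc n) n) (tg C (Suc n))) x"
    unfolding tgt_def x(4) using pre_comp[OF p tg_hom[OF gf] nh x(1)] by simp
  also have "\<dots> = Gmor G (Comp C (eps1 P (Suc n) n) (tg C (Suc n))) x" using nab_top[OF pg] by simp
  also have "\<dots> = tgt C G (Suc n) v"
    unfolding tgt_def x(2)[symmetric] using pre_comp[OF p tg_hom[OF gf] _ x(1)] cf by simp
  finally have 2: "tgt C G (Suc n) (gcomp C P G (Suc n) n v u) = tgt C G (Suc n) v" .
  have "gcomp C P G (Suc n) n v u \<in> Gob G (Dk C (Suc n))"
    unfolding x(4) using pre_in[OF p nh x(1)] by simp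
  with 1 2 show ?thesis by simp
qed


lemma pre_id: "presheaf C G \<Longrightarrow> X \<in> Ob C \<Longrightarrow> x \<in> Gob G X \<Longrightarrow> Gmor G (Idm C X) x = x"
  unfolding presheaf_def by auto
lemma dk_ob: "globe_functor C \<Longrightarrow> Dk C n \<in> Ob C" unfolding globe_functor_def by auto

lemma mid_exists:
  assumes ig: "infty_groupoid C G" and pg: "pregroupoidal C P"
    and r: "r \<in> hom C (Dk C (Suc m)) (Dk C (Suc (Suc m)))"
    and r1: "Comp C r (sg C (Suc m)) = Comp C (sg C (Suc (Suc m))) (sg C (Suc m))"
    and r2: "Comp C r (tg C (Suc m)) = Comp C (tg C (Suc (Suc m))) (tg C (Suc m))"
  shows "\<exists>mm \<in> hom C (Psum P (Suc m) m) (Psum P (Suc (Suc m)) m).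
     Comp C mm (eps1 P (Suc m) m) = Comp C (eps1 P (Suc (Suc m)) m) r \<and>
     Comp C mm (eps2 P (Suc m) m) = Comp C (eps2 P (Suc (Suc m)) m) r"
proof -
  note f = ig_facts[OF ig]
  have c: "category C" and gf: "globe_functor C" using f by auto
  note cs = colim_facts[OF pg, of m "Suc m"]
  note cb = colim_facts[OF pg, of m "Suc (Suc m)"]
  define F where "F = (\<lambda>k::nat. if k = 0 then Comp C (eps1 P (Suc (Suc m)) m) r else Comp C (eps2 P (Suc (Suc m)) m) r)"
  have h1: "Comp C (eps1 P (Suc (Suc m)) m) r \<in> hom C (Dk C (Suc m)) (Psum P (Suc (Suc m)) m)"
    using cat_comp_hom[OF c r] cb by auto
  have h2: "Comp C (eps2 P (Suc (Suc m)) m) r \<in> hom C (Dk C (Suc m)) (Psum P (Suc (Suc m)) m)"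
    using cat_comp_hom[OF c r] cb by auto
  have "Comp C (Comp C (eps1 P (Suc (Suc m)) m) r) (sg C (Suc m)) = Comp C (eps1 P (Suc (Suc m)) m) (Comp C r (sg C (Suc m)))"
    using cat_assoc[OF c sg_hom[OF gf] r, of "eps1 P (Suc (Suc m)) m"] cb by auto
  also have "\<dots> = Comp C (eps1 P (Suc (Suc m)) m) (sigma C (Suc (Suc m)) m)" using r1 sigma_SS[OF c gf] by simp
  also have "\<dots> = Comp C (eps2 P (Suc (Suc m)) m) (tau C (Suc (Suc m)) m)" using cb by simp
  also have "\<dots> = Comp C (eps2 P (Suc (Suc m)) m) (Comp C r (tg C (Suc m)))" using r2 tau_SS[OF c gf] by simp
  also have "\<dots> = Comp C (Comp C (eps2 P (Suc (Suc m)) m) r) (tg C (Suc m))"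
    using cat_assoc[OF c tg_hom[OF gf] r, of "eps2 P (Suc (Suc m)) m"] cb by auto
  finally have eq: "Comp C (Comp C (eps1 P (Suc (Suc m)) m) r) (sg C (Suc m)) = Comp C (Comp C (eps2 P (Suc (Suc m)) m) r) (tg C (Suc m))" .
  have "is_cocone C [Suc m, Suc m] [m] (Psum P (Suc (Suc m)) m) F"
    unfolding is_cocone_def F_def using cb h1 h2 eq sigma_S[OF c gf] tau_S[OF c gf]
    by (auto simp: less_Suc_eq)
  then obtain mm where mm: "mm \<in> hom C (Psum P (Suc m) m) (Psum P (Suc (Suc m)) m)"
    "\<forall>k < length [Suc m, Suc m]. Comp C mm ((\<lambda>k. if k = 0 then eps1 P (Suc m) m else eps2 P (Suc m) m) k) = F k"
    using colim[OF pg, of m "Suc m"] unfolding is_colimit_def by blast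
  from mm(2) have "Comp C mm (eps1 P (Suc m) m) = F 0" "Comp C mm (eps2 P (Suc m) m) = F 1" by auto
  then show ?thesis using mm(1) unfolding F_def by auto
qed

lemma mid_src:
  assumes ig: "infty_groupoid C G" and pg: "pregroupoidal C P"
    and r: "r \<in> hom C (Dk C (Suc m)) (Dk C (Suc (Suc m)))"
    and r1: "Comp C r (sg C (Suc m)) = Comp C (sg C (Suc (Suc m))) (sg C (Suc m))"
    and r2: "Comp C r (tg C (Suc m)) = Comp C (tg C (Suc (Suc m))) (tg C (Suc m))"
    and nabr: "\<And>mm. mm \<in> hom C (Psum P (Suc m) m) (Psum P (Suc (Suc m)) m) \<Longrightarrow>
     Comp C mm (eps1 P (Suc m) m) = Comp C (eps1 P (Suc (Suc m)) m) r \<Longrightarrow>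
     Comp C mm (eps2 P (Suc m) m) = Comp C (eps2 P (Suc (Suc m)) m) r \<Longrightarrow>
     Comp C (nab P (Suc (Suc m)) m) r = Comp C mm (nab P (Suc m) m)"
    and x: "x \<in> Gob G (Psum P (Suc (Suc m)) m)"
    and y: "y \<in> Gob G (Psum P (Suc m) m)"
    and y1: "Gmor G (eps1 P (Suc m) m) y = Gmor G r (Gmor G (eps1 P (Suc (Suc m)) m) x)"
    and y2: "Gmor G (eps2 P (Suc m) m) y = Gmor G r (Gmor G (eps2 P (Suc (Suc m)) m) x)"
  shows "Gmor G r (Gmor G (nab P (Suc (Suc m)) m) x) = Gmor G (nab P (Suc m) m) y"
proof -
  note f = ig_facts[OF ig]
  have c: "category C" and gf: "globe_functor C" and p: "presheaf C G" using f by auto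
  note cs = colim_facts[OF pg, of m "Suc m"]
  note cb = colim_facts[OF pg, of m "Suc (Suc m)"]
  obtain mm where mm: "mm \<in> hom C (Psum P (Suc m) m) (Psum P (Suc (Suc m)) m)"
     "Comp C mm (eps1 P (Suc m) m) = Comp C (eps1 P (Suc (Suc m)) m) r"
     "Comp C mm (eps2 P (Suc m) m) = Comp C (eps2 P (Suc (Suc m)) m) r"
    using mid_exists[OF ig pg r r1 r2] by blast
  have xm: "Gmor G mm x \<in> Gob G (Psum P (Suc m) m)" using pre_in[OF p mm(1) x] .
  have hs1: "eps1 P (Suc m) m \<in> hom C (Dk C (Suc m)) (Psum P (Suc m) m)" using cs by auto
  have hb1: "eps1 P (Suc (Suc m)) m \<in> hom C (Dk C (Suc (Suc m))) (Psum P (Suc (Suc m)) m)" using cb by auto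
  have e1: "Gmor G (eps1 P (Suc m) m) (Gmor G mm x) = Gmor G (eps1 P (Suc m) m) y"
    using pre_comp[OF p hs1 mm(1) x] pre_comp[OF p r hb1 x] mm(2) y1
    by simp
  have hs2: "eps2 P (Suc m) m \<in> hom C (Dk C (Suc m)) (Psum P (Suc m) m)" using cs by auto
  have hb2: "eps2 P (Suc (Suc m)) m \<in> hom C (Dk C (Suc (Suc m))) (Psum P (Suc (Suc m)) m)" using cb by auto
  have e2: "Gmor G (eps2 P (Suc m) m) (Gmor G mm x) = Gmor G (eps2 P (Suc m) m) y"
    using pre_comp[OF p hs2 mm(1) x] pre_comp[OF p r hb2 x] mm(3) y2
    by simp
  have yy: "Gmor G mm x = y" using xi_unique[OF ig pg _ xm y e1 e2] by simp
  have "Gmor G r (Gmor G (nab P (Suc (Suc m)) m) x) = Gmor G (Comp C (nab P (Suc (Suc m)) m) r) x"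
    using pre_comp[OF p r nab_hom[OF pg] x] by simp
  also have "\<dots> = Gmor G (Comp C mm (nab P (Suc m) m)) x" using nabr[OF mm] by simp
  also have "\<dots> = Gmor G (nab P (Suc m) m) y"
    using pre_comp[OF p nab_hom[OF pg] mm(1) x] yy by simp
  finally show ?thesis .
qed


lemma part1:
  assumes ig: "infty_groupoid C G" and pg: "pregroupoidal C P"
  shows "equiv (Gob G (Dk C n)) (homrel C G n)"
proof -
  note f = ig_facts[OF ig]
  have c: "category C" and gf: "globe_functor C" and p: "presheaf C G" using f by auto
  note kf = kap_facts[OF pg, of n]
  note wf = winv_facts[OF pg, of n]
  have refl: "homotopic C G n u u" if u: "u \<in> Gob G (Dk C n)" for u
  proof -
    have k: "Gmor G (kap P n) u \<in> Gob G (Dk C (Suc n))" using pre_in[OF p _ u] kf by blast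
    have "Gmor G (sg C (Suc n)) (Gmor G (kap P n) u) = u"
      using pre_comp[OF p sg_hom[OF gf, of n] _ u, of "kap P n"] kf pre_id[OF p dk_ob[OF gf] u] by simp
      moreover have "Gmor G (tg C (Suc n)) (Gmor G (kap P n) u) = u"
      using pre_comp[OF p tg_hom[OF gf, of n] _ u, of "kap P n"] kf pre_id[OF p dk_ob[OF gf] u] by simp
    ultimately show ?thesis unfolding homotopic_def src_def tgt_def using k by auto
  qed
  have sym: "homotopic C G n v u" if h: "homotopic C G n u v" for u v
  proof -
    obtain a where a: "a \<in> Gob G (Dk C (Suc n))" "src C G (Suc n) a = u" "tgt C G (Suc n) a = v"
      using h unfolding homotopic_def by auto
    have k: "Gmor G (winv P (Suc n) n) a \<in> Gob G (Dk C (Suc n))" using pre_in[OF p _ a(1)] wf by blast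
    have "Gmor G (sg C (Suc n)) (Gmor G (winv P (Suc n) n) a) = v"
      using pre_comp[OF p sg_hom[OF gf, of n] _ a(1), of "winv P (Suc n) n"] wf a unfolding tgt_def by simp
      moreover have "Gmor G (tg C (Suc n)) (Gmor G (winv P (Suc n) n) a) = u"
      using pre_comp[OF p tg_hom[OF gf, of n] _ a(1), of "winv P (Suc n) n"] wf a unfolding src_def by simp
    ultimately show ?thesis unfolding homotopic_def src_def tgt_def using k by auto
  qed
  have trans: "homotopic C G n u w" if h1: "homotopic C G n u v" and h2: "homotopic C G n v w" for u v w
  proof -
    obtain a where a: "a \<in> Gob G (Dk C (Suc n))" "src C G (Suc n) a = u" "tgt C G (Suc n) a = v"
      using h1 unfolding homotopic_def by auto
    obtain b where b: "b \<in> Gob G (Dk C (Suc n))" "src C G (Suc n) b = v" "tgt C G (Suc n) b = w"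
      using h2 unfolding homotopic_def by auto
    show ?thesis using comp_top[OF ig pg b(1) a(1)] a b unfolding homotopic_def by auto
  qed
  show ?thesis
  proof (rule equivI)
    show "refl_on (Gob G (Dk C n)) (homrel C G n)"
      by (rule refl_onI) (auto simp: homrel_def intro: refl)
    show "homrel C G n \<subseteq> Gob G (Dk C n) \<times> Gob G (Dk C n)" by (auto simp: homrel_def)
    show "sym (homrel C G n)"
      by (rule symI) (auto simp: homrel_def intro: sym)
    show "trans (homrel C G n)"
      by (rule transI) (auto simp: homrel_def intro: trans)
  qed
qed

lemma part2:
  assumes ig: "infty_groupoid C G" and pg: "pregroupoidal C P"
    and u: "u \<in> Gob G (Dk C (Suc m))" and u': "u' \<in> Gob G (Dk C (Suc m))"
    and v: "v \<in> Gob G (Dk C (Suc m))" and v': "v' \<in> Gob G (Dk C (Suc m))"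
    and hu: "homotopic C G (Suc m) u u'" and hv: "homotopic C G (Suc m) v v'"
    and st: "src C G (Suc m) v = tgt C G (Suc m) u"
  shows "homotopic C G (Suc m) (gcomp C P G (Suc m) m v u) (gcomp C P G (Suc m) m v' u')"
proof -
  note f = ig_facts[OF ig]
  have c: "category C" and gf: "globe_functor C" and p: "presheaf C G" using f by auto
  obtain a where a: "a \<in> Gob G (Dk C (Suc (Suc m)))" "Gmor G (sg C (Suc (Suc m))) a = u" "Gmor G (tg C (Suc (Suc m))) a = u'"
    using hu unfolding homotopic_def src_def tgt_def by auto
  obtain b where b: "b \<in> Gob G (Dk C (Suc (Suc m)))" "Gmor G (sg C (Suc (Suc m))) b = v" "Gmor G (tg C (Suc (Suc m))) b = v'"
    using hv unfolding homotopic_def src_def tgt_def by auto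
  note gs = glob_ss[OF gf, of m]
  note s1 = sg_hom[OF gf, of m] and t1 = tg_hom[OF gf, of m]
  note s2 = sg_hom[OF gf, of "Suc m"] and t2 = tg_hom[OF gf, of "Suc m"]
  have tu: "Gmor G (tg C (Suc m)) u' = Gmor G (tg C (Suc m)) u"
    using pre_comp[OF p t1 t2 a(1)] pre_comp[OF p t1 s2 a(1)] gs a by simp
  have sv: "Gmor G (sg C (Suc m)) v' = Gmor G (sg C (Suc m)) v"
    using pre_comp[OF p s1 t2 b(1)] pre_comp[OF p s1 s2 b(1)] gs b by simp
  have stv: "Gmor G (sg C (Suc m)) v = Gmor G (tg C (Suc m)) u" using st unfolding src_def tgt_def .
  have lt2: "m < Suc (Suc m)" and lt1: "m < Suc m" by simp_all
  have eqx: "Gmor G (sigma C (Suc (Suc m)) m) b = Gmor G (tau C (Suc (Suc m)) m) a"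
    using sigma_SS[OF c gf] tau_SS[OF c gf] pre_comp[OF p s1 s2 b(1)] pre_comp[OF p t1 t2 a(1)] a b tu stv by simp
  obtain x where x: "x \<in> Gob G (Psum P (Suc (Suc m)) m)" "Gmor G (eps1 P (Suc (Suc m)) m) x = b"
     "Gmor G (eps2 P (Suc (Suc m)) m) x = a" "gcomp C P G (Suc (Suc m)) m b a = Gmor G (nab P (Suc (Suc m)) m) x"
    using xi_exists[OF ig pg lt2 b(1) a(1) eqx] by blast
  have eqy: "Gmor G (sigma C (Suc m) m) v = Gmor G (tau C (Suc m) m) u"
    using stv sigma_S[OF c gf] tau_S[OF c gf] by simp
  have eqy': "Gmor G (sigma C (Suc m) m) v' = Gmor G (tau C (Suc m) m) u'"
    using stv sv tu sigma_S[OF c gf] tau_S[OF c gf] by simp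
  obtain y where y: "y \<in> Gob G (Psum P (Suc m) m)" "Gmor G (eps1 P (Suc m) m) y = v"
     "Gmor G (eps2 P (Suc m) m) y = u" "gcomp C P G (Suc m) m v u = Gmor G (nab P (Suc m) m) y"
    using xi_exists[OF ig pg lt1 v u eqy] by blast
  obtain y' where y': "y' \<in> Gob G (Psum P (Suc m) m)" "Gmor G (eps1 P (Suc m) m) y' = v'"
     "Gmor G (eps2 P (Suc m) m) y' = u'" "gcomp C P G (Suc m) m v' u' = Gmor G (nab P (Suc m) m) y'"
    using xi_exists[OF ig pg lt1 v' u' eqy'] by blast
  have cin: "Gmor G (nab P (Suc (Suc m)) m) x \<in> Gob G (Dk C (Suc (Suc m)))"
    using pre_in[OF p nab_hom[OF pg] x(1)] by simp
  have S1: "Gmor G (sg C (Suc (Suc m))) (Gmor G (nab P (Suc (Suc m)) m) x) = Gmor G (nab P (Suc m) m) y"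
  proof -
    have y1: "Gmor G (eps1 P (Suc m) m) y = Gmor G (sg C (Suc (Suc m))) (Gmor G (eps1 P (Suc (Suc m)) m) x)"
      using y(2) x(2) b(2) by simp
    have y2: "Gmor G (eps2 P (Suc m) m) y = Gmor G (sg C (Suc (Suc m))) (Gmor G (eps2 P (Suc (Suc m)) m) x)"
      using y(3) x(3) a(2) by simp
    show ?thesis by (rule mid_src[OF ig pg s2 refl conjunct2[OF gs] nab_mid[OF pg] x(1) y(1) y1 y2])
  qed
  have S2: "Gmor G (tg C (Suc (Suc m))) (Gmor G (nab P (Suc (Suc m)) m) x) = Gmor G (nab P (Suc m) m) y'"
  proof -
    have y1: "Gmor G (eps1 P (Suc m) m) y' = Gmor G (tg C (Suc (Suc m))) (Gmor G (eps1 P (Suc (Suc m)) m) x)"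
      using y'(2) x(2) b(3) by simp
    have y2: "Gmor G (eps2 P (Suc m) m) y' = Gmor G (tg C (Suc (Suc m))) (Gmor G (eps2 P (Suc (Suc m)) m) x)"
      using y'(3) x(3) a(3) by simp
    show ?thesis by (rule mid_src[OF ig pg t2 conjunct1[OF gs, symmetric] refl nab_mid_t[OF pg] x(1) y'(1) y1 y2])
  qed
  have e: "Suc m + 1 = Suc (Suc m)" by simp
  show ?thesis unfolding homotopic_def src_def tgt_def y(4) y'(4) e
    by (rule bexI[of _ "Gmor G (nab P (Suc (Suc m)) m) x"]) (simp only: S1 S2, rule cin)
qed

theorem lemma4:
  fixes C :: "('o, 'm, 'x) gcat_scheme" and P :: "('o, 'm) pregr" and G :: "('o, 'm, 'a) presh"
  assumes "contractible C"
    and "pregroupoidal C P"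
    and "infty_groupoid C G"
  shows "(\<forall>n. equiv (Gob G (Dk C n)) (homrel C G n)) \<and>
         (\<forall>n \<ge> 1. \<forall>u \<in> Gob G (Dk C n). \<forall>u' \<in> Gob G (Dk C n). \<forall>v \<in> Gob G (Dk C n). \<forall>v' \<in> Gob G (Dk C n).
            homotopic C G n u u' \<and> homotopic C G n v v' \<and> src C G n v = tgt C G n u \<longrightarrow>
            homotopic C G n (gcomp C P G n (n - 1) v u) (gcomp C P G n (n - 1) v' u'))"
proof (intro conjI allI impI ballI)
  fix n show "equiv (Gob G (Dk C n)) (homrel C G n)" using part1[OF assms(3,2)] .
next
  fix n :: nat and u u' v v'
  assume n: "1 \<le> n" and h: "u \<in> Gob G (Dk C n)" "u' \<in> Gob G (Dk C n)" "v \<in> Gob G (Dk C n)" "v' \<in> Gob G (Dk C n)"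
    and hh: "homotopic C G n u u' \<and> homotopic C G n v v' \<and> src C G n v = tgt C G n u"
  obtain m where m: "n = Suc m" using n by (cases n) auto
  show "homotopic C G n (gcomp C P G n (n - 1) v u) (gcomp C P G n (n - 1) v' u')"
    using part2[OF assms(3,2), of u m u' v v'] h hh unfolding m by simp
qed

end
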